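(* Let $\hat A$ be a complete discrete valuation ring with maximal ideal $\mathfrak p$, let $n$ be a positive integer, and let $H_n$ be the ideal of $\hat A$ generated by all $x^n-1$ with $x\in\hat A^\times$. Then an ideal $I$ of $\hat A$ is $n$-congruing if and only if $H_n\subseteq I$.
   Context: An ideal $I$ of a commutative ring $R$ is $n$-congruing if for every $a\in R$ there is $N\in\mathbb{N}$ with $a^N(a^n-1)\in I$. *)

theory Defs
  imports Main
begin

definition is_ideal :: "'a::comm_ring_1 set \<Rightarrow> bool" where
  "is_ideal I \<longleftrightarrow> 0 \<in> I \<and> (\<forall>x\<in>I. \<forall>y\<in>I. x + y \<in> I) \<and> (\<forall>r x. x \<in> I \<longrightarrow> r * x \<in> I)"

definition ideal_gen :: "'a::comm_ring_1 set \<Rightarrow> 'a set" where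
  "ideal_gen S = \<Inter>{I. is_ideal I \<and> S \<subseteq> I}"

definition ideal_prod :: "'a::comm_ring_1 set \<Rightarrow> 'a set \<Rightarrow> 'a set" where
  "ideal_prod I J = ideal_gen {x * y | x y. x \<in> I \<and> y \<in> J}"

primrec ideal_pow :: "'a::comm_ring_1 set \<Rightarrow> nat \<Rightarrow> 'a set" where
  "ideal_pow I 0 = UNIV"
| "ideal_pow I (Suc k) = ideal_prod I (ideal_pow I k)"

definition is_maximal_ideal :: "'a::comm_ring_1 set \<Rightarrow> bool" where
  "is_maximal_ideal M \<longleftrightarrow> is_ideal M \<and> M \<noteq> UNIV \<and>
     (\<forall>J. is_ideal J \<and> M \<subseteq> J \<longrightarrow> J = M \<or> J = UNIV)"

definition dvr :: "'a::idom itself \<Rightarrow> bool" where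
  "dvr _ \<longleftrightarrow>
     (\<forall>I::'a set. is_ideal I \<longrightarrow> (\<exists>a. I = {a * r | r. True})) \<and>
     (\<exists>!M::'a set. is_maximal_ideal M) \<and>
     (\<exists>x::'a. x \<noteq> 0 \<and> \<not> x dvd 1)"

definition padic_complete :: "'a::comm_ring_1 set \<Rightarrow> bool" where
  "padic_complete P \<longleftrightarrow>
     (\<forall>f :: nat \<Rightarrow> 'a.
        (\<forall>k. \<exists>N. \<forall>m\<ge>N. \<forall>n\<ge>N. f m - f n \<in> ideal_pow P k) \<longrightarrow>
        (\<exists>x. \<forall>k. \<exists>N. \<forall>n\<ge>N. f n - x \<in> ideal_pow P k))"

definition n_congruing :: "nat \<Rightarrow> 'a::comm_ring_1 set \<Rightarrow> bool" where
  "n_congruing n I \<longleftrightarrow> (\<forall>a. \<exists>N::nat. a ^ N * (a ^ n - 1) \<in> I)"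

definition H_ideal :: "nat \<Rightarrow> 'a::comm_ring_1 set" where
  "H_ideal n = ideal_gen {x ^ n - 1 | x. x dvd 1}"

end

theory Submission
  imports Defs "HOL-Computational_Algebra.Polynomial"
begin

lemma ideal_mult_r: "is_ideal I \<Longrightarrow> x \<in> I \<Longrightarrow> x * r \<in> I"
  unfolding is_ideal_def by (metis mult.commute)

lemma ideal_gen_sub: "is_ideal I \<Longrightarrow> S \<subseteq> I \<Longrightarrow> ideal_gen S \<subseteq> I"
  unfolding ideal_gen_def by blast

lemma ideal_gen_mem: "x \<in> S \<Longrightarrow> x \<in> ideal_gen S"
  unfolding ideal_gen_def by blast

lemma exists_max:
  fixes x :: "'a::comm_ring_1"
  assumes "\<not> x dvd 1"
  shows "\<exists>M. is_maximal_ideal M \<and> x \<in> M"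
proof -
  define A where "A = {J::'a set. is_ideal J \<and> x \<in> J \<and> 1 \<notin> J}"
  have xA: "{x * r | r. True} \<in> A"
  proof -
    have "is_ideal {x * r | r. True}" unfolding is_ideal_def
    proof (intro conjI ballI allI impI)
      show "0 \<in> {x * r | r. True}" by (rule CollectI, rule exI[of _ 0]) simp
    next
      fix a b assume "a \<in> {x * r | r. True}" "b \<in> {x * r | r. True}"
      then obtain r s where "a = x * r" "b = x * s" by blast
      then have "a + b = x * (r + s)" by (simp add: algebra_simps)
      then show "a + b \<in> {x * r | r. True}" by blast
    next
      fix t a assume "a \<in> {x * r | r. True}"
      then obtain r where "a = x * r" by blast
      then have "t * a = x * (t * r)" by (simp add: algebra_simps)
      then show "t * a \<in> {x * r | r. True}" by blast
    qed
    moreover have "x \<in> {x * r | r. True}" by (rule CollectI, rule exI[of _ 1]) simp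
    moreover have "1 \<notin> {x * r | r. True}" using assms by (auto intro: dvdI)
    ultimately show ?thesis unfolding A_def by blast
  qed
  have "\<exists>M\<in>A. \<forall>X\<in>A. M \<subseteq> X \<longrightarrow> X = M"
  proof (rule subset_Zorn_nonempty)
    show "A \<noteq> {}" using xA by blast
    fix C assume ne: "C \<noteq> {}" and ch: "subset.chain A C"
    have CA: "C \<subseteq> A" and tot: "\<And>X Y. X \<in> C \<Longrightarrow> Y \<in> C \<Longrightarrow> X \<subseteq> Y \<or> Y \<subseteq> X"
      using ch unfolding subset.chain_def by auto
    have "is_ideal (\<Union>C)"
      unfolding is_ideal_def
    proof (intro conjI ballI allI impI)
      show "0 \<in> \<Union>C" using ne CA unfolding A_def is_ideal_def by blast
    next
      fix a b assume "a \<in> \<Union>C" "b \<in> \<Union>C"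
      then obtain X Y where XY: "X \<in> C" "Y \<in> C" "a \<in> X" "b \<in> Y" by blast
      from tot[OF XY(1,2)] show "a + b \<in> \<Union>C"
      proof
        assume "X \<subseteq> Y" thus ?thesis using XY CA unfolding A_def is_ideal_def by blast
      next
        assume "Y \<subseteq> X" thus ?thesis using XY CA unfolding A_def is_ideal_def by blast
      qed
    next
      fix r a assume "a \<in> \<Union>C"
      thus "r * a \<in> \<Union>C" using CA unfolding A_def is_ideal_def by blast
    qed
    moreover have "x \<in> \<Union>C" "1 \<notin> \<Union>C" using ne CA unfolding A_def by auto
    ultimately show "\<Union>C \<in> A" unfolding A_def by blast
  qed
  then obtain M where MA: "M \<in> A" and Mmax: "\<forall>X\<in>A. M \<subseteq> X \<longrightarrow> X = M" by blast
  have "is_maximal_ideal M"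
    unfolding is_maximal_ideal_def
  proof (intro conjI allI impI)
    show "is_ideal M" "M \<noteq> UNIV" using MA unfolding A_def by auto
    fix J assume J: "is_ideal J \<and> M \<subseteq> J"
    show "J = M \<or> J = UNIV"
    proof (cases "1 \<in> J")
      case True
      then have "\<And>r. r * 1 \<in> J" using J unfolding is_ideal_def by blast
      then show ?thesis by auto
    next
      case False
      then have "J \<in> A" using J MA unfolding A_def by auto
      then show ?thesis using Mmax J by blast
    qed
  qed
  then show ?thesis using MA unfolding A_def by blast
qed

lemma descent:
  fixes p b :: "'a::idom"
  assumes pid: "\<forall>I::'a set. is_ideal I \<longrightarrow> (\<exists>a. I = {a * r | r. True})"
    and p0: "p \<noteq> 0" and pu: "\<not> p dvd 1" and b0: "b \<noteq> 0"
  shows "\<exists>m. p ^ m dvd b \<and> \<not> p ^ Suc m dvd b"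
proof (rule ccontr)
  assume "\<not> ?thesis"
  then have step: "\<And>m. p ^ m dvd b \<Longrightarrow> p ^ Suc m dvd b" by blast
  have all: "\<And>m. p ^ m dvd b"
  proof -
    fix m show "p ^ m dvd b" by (induction m) (use step in auto)
  qed
  define x where "x m = (SOME y. b = p ^ m * y)" for m
  have bx: "b = p ^ m * x m" for m
    unfolding x_def by (rule someI_ex) (use all[of m] in \<open>auto elim: dvdE\<close>)
  have xs: "x m = p * x (Suc m)" for m
  proof -
    have "p ^ m * x m = p ^ m * (p * x (Suc m))" proof -
      have "p ^ m * x m = p ^ Suc m * x (Suc m)" using bx[of m] bx[of "Suc m"] by metis
      then show ?thesis by (simp add: mult.assoc mult.left_commute)
    qed
    then show ?thesis using p0 by simp
  qed
  have xdvd: "x (j + d) dvd x j" for j d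
  proof (induction d)
    case 0 then show ?case by simp
  next
    case (Suc d)
    have "x (j + Suc d) dvd x (j + d)" using xs[of "j+d"] by simp
    then show ?case using Suc dvd_trans by blast
  qed
  have xdvd': "j \<le> k \<Longrightarrow> x k dvd x j" for j k
    using xdvd[of j "k - j"] by simp
  define U where "U = {r. \<exists>m. x m dvd r}"
  have "is_ideal U" unfolding is_ideal_def U_def
  proof (intro conjI ballI allI impI)
    show "0 \<in> {r. \<exists>m. x m dvd r}" by simp
  next
    fix a c assume "a \<in> {r. \<exists>m. x m dvd r}" "c \<in> {r. \<exists>m. x m dvd r}"
    then obtain m1 m2 where "x m1 dvd a" "x m2 dvd c" by blast
    then have "x (max m1 m2) dvd a" "x (max m1 m2) dvd c"
      using xdvd'[of m1 "max m1 m2"] xdvd'[of m2 "max m1 m2"] dvd_trans by auto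
    then show "a + c \<in> {r. \<exists>m. x m dvd r}" using dvd_add by blast
  next
    fix t a assume "a \<in> {r. \<exists>m. x m dvd r}"
    then show "t * a \<in> {r. \<exists>m. x m dvd r}" using dvd_mult by blast
  qed
  then obtain g where g: "U = {g * r | r. True}" using pid by blast
  have "g \<in> U" unfolding g by (rule CollectI, rule exI[of _ 1]) simp
  then obtain k where k: "x k dvd g" unfolding U_def by blast
  have "x (Suc k) \<in> U" unfolding U_def using dvd_refl by blast
  then have "g dvd x (Suc k)" unfolding g by auto
  then have "p * x (Suc k) dvd x (Suc k)" using k xs[of k] dvd_trans by metis
  moreover have "x (Suc k) \<noteq> 0" using bx[of "Suc k"] b0 by auto
  ultimately have "p dvd 1"
    by (metis dvd_mult_cancel_right mult.commute mult_1)
  then show False using pu by simp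
qed

lemma roots_contra:
  fixes p :: "'a::idom"
  assumes p0: "p \<noteq> 0" and pu: "\<not> p dvd 1" and n: "n > 0"
    and h: "\<And>k. (1 + p ^ Suc k) ^ n = 1"
  shows False
proof -
  define q :: "'a poly" where "q = monom 1 n - 1"
  have "coeff q n = 1" unfolding q_def using n by simp
  then have "q \<noteq> 0" by auto
  then have fin: "finite {y. poly q y = 0}" by (rule poly_roots_finite)
  have sub: "range (\<lambda>k. 1 + p ^ Suc k) \<subseteq> {y. poly q y = 0}"
    unfolding q_def using h by (auto simp: poly_monom)
  have "inj (\<lambda>k. 1 + p ^ Suc k)"
  proof (rule injI)
    have key: "p ^ Suc k \<noteq> p ^ Suc j" if "k < j" for k j
    proof
      assume e: "p ^ Suc k = p ^ Suc j"
      have "p ^ Suc j = p ^ Suc k * p ^ (j - k)" using that by (simp add: power_add[symmetric])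
      with e have "p ^ Suc k * 1 = p ^ Suc k * p ^ (j - k)" by (metis mult_1_right)
      then have "p ^ (j - k) = 1" using p0 by (metis mult_left_cancel power_not_zero)
      then have "p dvd 1" using that
        by (metis dvd_power less_imp_Suc_add zero_less_Suc add_diff_cancel_left' Suc_diff_Suc diff_zero dvd_refl)
      then show False using pu by simp
    qed
    fix k j assume "1 + p ^ Suc k = 1 + p ^ Suc j"
    then have "p ^ Suc k = p ^ Suc j" by simp
    then show "k = j" using key[of k j] key[of j k] by (metis linorder_neqE_nat)
  qed
  then have "infinite (range (\<lambda>k. 1 + p ^ Suc k))" using range_inj_infinite by blast
  then show False using fin sub finite_subset by blast
qed

theorem mainTheorem12:
  fixes P :: "'a::idom set" and n :: nat and I :: "'a set"
  assumes "dvr TYPE('a)"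
    and "is_maximal_ideal P"
    and "padic_complete P"
    and "n > 0"
    and "is_ideal I"
  shows "n_congruing n I \<longleftrightarrow> H_ideal n \<subseteq> I"
proof
  assume nc: "n_congruing n I"
  show "H_ideal n \<subseteq> I" unfolding H_ideal_def
  proof (rule ideal_gen_sub[OF assms(5)], rule subsetI)
    fix y :: 'a assume "y \<in> {x ^ n - 1 | x. x dvd 1}"
    then obtain x where y: "y = x ^ n - 1" and xu: "x dvd 1" by blast
    obtain N where N: "x ^ N * (x ^ n - 1) \<in> I" using nc unfolding n_congruing_def by blast
    obtain v where v: "1 = x * v" using xu by (elim dvdE)
    have "(v ^ N) * (x ^ N * (x ^ n - 1)) \<in> I"
      using N assms(5) unfolding is_ideal_def by blast
    moreover have "(v ^ N) * (x ^ N * (x ^ n - 1)) = x ^ n - 1"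
    proof -
      have "v ^ N * x ^ N = 1" using v by (simp add: power_mult_distrib[symmetric] mult.commute)
      then show ?thesis by (metis mult.assoc mult_1)
    qed
    ultimately show "y \<in> I" using y by simp
  qed
next
  assume H: "H_ideal n \<subseteq> I"
  have pid: "\<forall>I::'a set. is_ideal I \<longrightarrow> (\<exists>a. I = {a * r | r. True})"
    and uniq: "\<exists>!M::'a set. is_maximal_ideal M"
    and ex: "\<exists>x::'a. x \<noteq> 0 \<and> \<not> x dvd 1"
    using assms(1) unfolding dvr_def by auto
  have loc: "a \<in> P" if na: "\<not> a dvd 1" for a
  proof -
    obtain M where "is_maximal_ideal M" "a \<in> M" using exists_max[OF na] by blast
    then show ?thesis using uniq assms(2) by blast
  qed
  have Pid: "is_ideal P" and PU: "P \<noteq> UNIV" using assms(2) unfolding is_maximal_ideal_def by auto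
  have oneP: "1 \<notin> P"
  proof
    assume "1 \<in> P"
    then have "\<And>r. r * 1 \<in> P" using Pid unfolding is_ideal_def by blast
    then show False using PU by auto
  qed
  obtain p where Pp: "P = {p * r | r. True}" using pid Pid by blast
  have pu: "\<not> p dvd 1"
  proof
    assume "p dvd 1"
    then obtain v where "1 = p * v" by (elim dvdE)
    then have "1 \<in> P" unfolding Pp by blast
    then show False using oneP by simp
  qed
  have p0: "p \<noteq> 0"
  proof
    assume "p = 0"
    obtain x :: 'a where "x \<noteq> 0" "\<not> x dvd 1" using ex by blast
    then have "x \<in> P" using loc by blast
    then show False using \<open>p = 0\<close> \<open>x \<noteq> 0\<close> unfolding Pp by auto
  qed
  have unit1: "(1 + y) dvd 1" if "y \<in> P" for y
  proof (rule ccontr)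
    assume "\<not> (1 + y) dvd 1"
    then have "1 + y \<in> P" by (rule loc)
    moreover have "- y \<in> P" using that Pid unfolding is_ideal_def by (metis mult_minus1)
    ultimately have "(1 + y) + - y \<in> P" using Pid unfolding is_ideal_def by blast
    then show False using oneP by simp
  qed
  have Hmem: "x ^ n - 1 \<in> I" if "x dvd 1" for x
    using H that unfolding H_ideal_def by (blast intro: ideal_gen_mem)
  obtain b where Ib: "I = {b * r | r. True}" using pid assms(5) by blast
  have b0: "b \<noteq> 0"
  proof
    assume "b = 0"
    then have I0: "I = {0}" unfolding Ib by auto
    have "(1 + p ^ Suc k) ^ n = 1" for k
    proof -
      have "p ^ Suc k \<in> P" unfolding Pp by auto
      then have "(1 + p ^ Suc k) ^ n - 1 \<in> I" by (intro Hmem unit1)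
      then show ?thesis using I0 by simp
    qed
    then show False using roots_contra[OF p0 pu assms(4)] by blast
  qed
  obtain m where m1: "p ^ m dvd b" and m2: "\<not> p ^ Suc m dvd b"
    using descent[OF pid p0 pu b0] by blast
  obtain u where bu: "b = p ^ m * u" using m1 by (elim dvdE)
  have "\<not> p dvd u" using m2 bu by (metis mult_dvd_mono power_Suc2 dvd_refl mult.commute)
  then have "u \<notin> P" unfolding Pp by auto
  then have "u dvd 1" using loc by blast
  then obtain w where w: "1 = u * w" by (elim dvdE)
  show "n_congruing n I" unfolding n_congruing_def
  proof
    fix a :: 'a
    show "\<exists>N. a ^ N * (a ^ n - 1) \<in> I"
    proof (cases "a dvd 1")
      case True
      then show ?thesis using Hmem[OF True] by (intro exI[of _ 0]) simp
    next
      case False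
      then have "a \<in> P" by (rule loc)
      then obtain c where c: "a = p * c" unfolding Pp by blast
      have "a ^ m * (a ^ n - 1) = b * (w * c ^ m * (a ^ n - 1))"
      proof -
        have "b * (w * c ^ m * (a ^ n - 1)) = p ^ m * (u * w) * c ^ m * (a ^ n - 1)"
          using bu by (simp add: mult_ac)
        also have "\<dots> = (p * c) ^ m * (a ^ n - 1)" using w by (simp add: power_mult_distrib)
        finally show ?thesis using c by metis
      qed
      then have "a ^ m * (a ^ n - 1) \<in> I" unfolding Ib by blast
      then show ?thesis by blast
    qed
  qed
qed

end
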